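(* Let $L$ be a $\kappa$-frame. The map $a\mapsto\partial_{(\downarrow a)^{**}}$ is a $\kappa$-frame homomorphism from $L$ to the frame ${\uparrow}\mathfrak{D}_L=\{C\in\mathbb{C}L\mid C\supseteq\mathfrak{D}_L\}$, and its kernel $\{(a,b)\mid\partial_{(\downarrow a)^{**}}=\partial_{(\downarrow b)^{**}}\}$ equals $\mathfrak{D}_L$. In particular this map is monotone, and the set of clear congruences of the form $\partial_{(\downarrow a)^{**}}$ ($a\in L$) is closed under finite meets and nonempty joins of fewer than $\kappa$ elements in $\mathbb{C}L$.
   Context: $\kappa$ is a fixed regular cardinal; a $\kappa$-frame is a bounded distributive lattice having joins of all subsets of cardinality $<\kappa$ and satisfying the frame distributive law for such joins; homomorphisms preserve finite meets and joins of $<\kappa$ elements. A $\kappa$-ideal is a downset in which every subset of cardinality $<\kappa$ has an upper bound; $\mathfrak{H}_\kappa L$ is the frame of $\kappa$-ideals under inclusion, $\downarrow a=\{x\mid x\le a\}$, and $J^*$ is the pseudocomplement in $\mathfrak{H}_\kappa L$. A congruence is an equivalence relation that is a sub-$\kappa$-frame of $L\times L$; $\mathbb{C}L$ is the frame of congruences under inclusion, and ${\uparrow}\mathfrak{D}_L$ carries the meets and joins of $\mathbb{C}L$, with bottom $\mathfrak{D}_L$. $\mathfrak{D}_L=\{(b,c)\mid\forall x\in L:\ b\wedge x=0\iff c\wedge x=0\}$; for a $\kappa$-ideal $I$, $\partial_I=\{(b,c)\mid\forall x\in L:\ b\wedge x\in I\iff c\wedge x\in I\}$, and congruences of this form are called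 clear. *)

theory Defs
  imports Main
begin

unbundle cardinal_syntax

text \<open>The regular cardinal kappa is represented by a cardinal order relation
  k (on an arbitrary type 'k) with Cinfinite k and regularCard k.
  "S has cardinality < kappa" is |S| <o k.\<close>

definition is_lub :: "'a::order set \<Rightarrow> 'a \<Rightarrow> bool" where
  "is_lub S x \<longleftrightarrow> (\<forall>s\<in>S. s \<le> x) \<and> (\<forall>y. (\<forall>s\<in>S. s \<le> y) \<longrightarrow> x \<le> y)"

definition ksup :: "'a::order set \<Rightarrow> 'a" where
  "ksup S = (THE x. is_lub S x)"

definition kappa_frame :: "'k rel \<Rightarrow> ('a::{distrib_lattice,bounded_lattice}) itself \<Rightarrow> bool" where
  "kappa_frame k _ \<longleftrightarrow>
     (\<forall>S::'a set. |S| <o k \<longrightarrow> (\<exists>x. is_lub S x)) \<and>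
     (\<forall>(a::'a) S. |S| <o k \<longrightarrow> inf a (ksup S) = ksup ((\<lambda>s. inf a s) ` S))"

definition kideal :: "'k rel \<Rightarrow> ('a::{distrib_lattice,bounded_lattice}) set \<Rightarrow> bool" where
  "kideal k I \<longleftrightarrow> (\<forall>x y. y \<in> I \<longrightarrow> x \<le> y \<longrightarrow> x \<in> I) \<and>
     (\<forall>S. S \<subseteq> I \<longrightarrow> |S| <o k \<longrightarrow> (\<exists>u\<in>I. \<forall>s\<in>S. s \<le> u))"

definition kpc :: "'k rel \<Rightarrow> ('a::{distrib_lattice,bounded_lattice}) set \<Rightarrow> 'a set" where
  "kpc k J = (THE K. kideal k K \<and> K \<inter> J = {bot} \<and>
      (\<forall>K'. kideal k K' \<and> K' \<inter> J = {bot} \<longrightarrow> K' \<subseteq> K))"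

definition down :: "'a::order \<Rightarrow> 'a set" where
  "down a = {x. x \<le> a}"

definition kcong :: "'k rel \<Rightarrow> ('a::{distrib_lattice,bounded_lattice}) rel \<Rightarrow> bool" where
  "kcong k C \<longleftrightarrow> equiv UNIV C \<and> (top, top) \<in> C \<and>
     (\<forall>a b c d. (a, b) \<in> C \<longrightarrow> (c, d) \<in> C \<longrightarrow> (inf a c, inf b d) \<in> C) \<and>
     (\<forall>S. S \<subseteq> C \<longrightarrow> |S| <o k \<longrightarrow> (ksup (fst ` S), ksup (snd ` S)) \<in> C)"

definition cjoin :: "'k rel \<Rightarrow> ('a::{distrib_lattice,bounded_lattice}) rel set \<Rightarrow> 'a rel" where
  "cjoin k F = \<Inter>{C. kcong k C \<and> \<Union>F \<subseteq> C}"

definition DL :: "('a::{distrib_lattice,bounded_lattice}) rel" where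
  "DL = {(b, c). \<forall>x. inf b x = bot \<longleftrightarrow> inf c x = bot}"

definition partial :: "('a::{distrib_lattice,bounded_lattice}) set \<Rightarrow> 'a rel" where
  "partial I = {(b, c). \<forall>x. inf b x \<in> I \<longleftrightarrow> inf c x \<in> I}"

definition upjoin :: "'k rel \<Rightarrow> ('a::{distrib_lattice,bounded_lattice}) rel set \<Rightarrow> 'a rel" where
  "upjoin k F = cjoin k (insert DL F)"

definition dmap :: "'k rel \<Rightarrow> ('a::{distrib_lattice,bounded_lattice}) \<Rightarrow> 'a rel" where
  "dmap k a = partial (kpc k (kpc k (down a)))"

end

theory Submission
  imports Defs
begin
unbundle cardinal_syntax

lemma fin_less: assumes "Cinfinite k" "finite A" shows "|A| <o k"
  using Cfinite_ordLess_Cinfinite[of "|A|" k] assms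
  by (simp add: cfinite_def Field_card_of card_of_Card_order card_of_card_order_on)

lemma img_less: assumes "|S| <o k" shows "|f ` S| <o k"
  using card_of_image ordLeq_ordLess_trans assms by blast

lemma lub_unique: "is_lub S x \<Longrightarrow> is_lub S y \<Longrightarrow> x = y"
  unfolding is_lub_def by (meson order_antisym)

lemma ksup_eq: "is_lub S x \<Longrightarrow> ksup S = x"
  unfolding ksup_def using lub_unique by blast

lemma le_bot1: "(x::'b::bounded_lattice) \<le> y \<Longrightarrow> inf y j = bot \<Longrightarrow> inf x j = bot"
  by (metis inf_mono order_refl le_bot)
lemma le_bot2: "(j::'b::bounded_lattice) \<le> a \<Longrightarrow> inf x a = bot \<Longrightarrow> inf x j = bot"
  by (metis inf_mono order_refl le_bot)

locale kf =
  fixes k :: "'k rel" and TT :: "'a::{distrib_lattice,bounded_lattice} itself"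
  assumes cinf: "Cinfinite k" and kfr: "kappa_frame k TYPE('a)"
begin

lemma lub: "|S| <o k \<Longrightarrow> is_lub (S::'a set) (ksup S)"
  using kfr unfolding kappa_frame_def using ksup_eq by metis

lemma dist: "|S| <o k \<Longrightarrow> inf (a::'a) (ksup S) = ksup ((\<lambda>s. inf a s) ` S)"
  using kfr unfolding kappa_frame_def by blast

lemma upper: "|S| <o k \<Longrightarrow> s \<in> S \<Longrightarrow> s \<le> ksup (S::'a set)"
  using lub unfolding is_lub_def by blast

lemma least: "|S| <o k \<Longrightarrow> (\<And>s. s \<in> S \<Longrightarrow> s \<le> y) \<Longrightarrow> ksup (S::'a set) \<le> y"
  using lub unfolding is_lub_def by blast

lemma ksup_bot: "S \<subseteq> {bot::'a} \<Longrightarrow> ksup S = bot"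
  by (rule ksup_eq) (auto simp: is_lub_def)

lemma ideal_bot: "kideal k (I::'a set) \<Longrightarrow> bot \<in> I"
  unfolding kideal_def using fin_less[OF cinf, of "{}::'a set"] by auto

lemma ideal_join: assumes "kideal k (I::'a set)" "|S| <o k"
  shows "ksup S \<in> I \<longleftrightarrow> S \<subseteq> I"
proof
  assume "ksup S \<in> I" then show "S \<subseteq> I" using assms upper unfolding kideal_def by blast
next
  assume "S \<subseteq> I"
  then obtain u where "u \<in> I" "\<forall>s\<in>S. s \<le> u" using assms unfolding kideal_def by blast
  then show "ksup S \<in> I" using assms least[of S u] unfolding kideal_def by blast
qed

definition perp :: "'a set \<Rightarrow> 'a set" where
  "perp J = {x. \<forall>j\<in>J. inf x j = bot}"

lemma perp_ideal: "kideal k (perp J)"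
  unfolding kideal_def
proof (intro conjI allI impI)
  fix x y assume "y \<in> perp J" "x \<le> y"
  then show "x \<in> perp J" unfolding perp_def
    using le_bot1 by blast
next
  fix S assume S: "S \<subseteq> perp J" "|S| <o k"
  have "ksup S \<in> perp J" unfolding perp_def
  proof (intro CollectI ballI)
    fix j assume "j \<in> J"
    have "inf (ksup S) j = inf j (ksup S)" by (simp add: inf_commute)
    also have "\<dots> = ksup ((\<lambda>s. inf j s) ` S)" using dist S by blast
    also have "\<dots> = bot" using S \<open>j \<in> J\<close> by (intro ksup_bot) (auto simp: perp_def inf_commute)
    finally show "inf (ksup S) j = bot" .
  qed
  then show "\<exists>u\<in>perp J. \<forall>s\<in>S. s \<le> u" using upper S by blast
qed

lemma kpc_perp: assumes "bot \<in> J" "\<And>x y. y \<in> J \<Longrightarrow> x \<le> y \<Longrightarrow> x \<in> J"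
  shows "kpc k J = perp J"
  unfolding kpc_def
proof (rule the_equality)
  have max: "K' \<subseteq> perp J" if "kideal k K'" "K' \<inter> J = {bot}" for K'
  proof
    fix x assume x: "x \<in> K'"
    show "x \<in> perp J" unfolding perp_def
    proof (intro CollectI ballI)
      fix j assume "j \<in> J"
      have "inf x j \<in> K'" using that x unfolding kideal_def by auto
      moreover have "inf x j \<in> J" using assms(2) \<open>j \<in> J\<close> by auto
      ultimately show "inf x j = bot" using that by blast
    qed
  qed
  have int: "perp J \<inter> J = {bot}" using assms(1) by (auto simp: perp_def)
  show "kideal k (perp J) \<and> perp J \<inter> J = {bot} \<and>
      (\<forall>K'. kideal k K' \<and> K' \<inter> J = {bot} \<longrightarrow> K' \<subseteq> perp J)"
    using perp_ideal int max by blast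
  fix K assume "kideal k K \<and> K \<inter> J = {bot} \<and>
      (\<forall>K'. kideal k K' \<and> K' \<inter> J = {bot} \<longrightarrow> K' \<subseteq> K)"
  then show "K = perp J" using perp_ideal int max by (meson subset_antisym)
qed

definition R :: "'a \<Rightarrow> 'a set" where
  "R a = perp {z. inf z a = bot}"

lemma perp_down: "perp (down a) = {z. inf z a = bot}"
  unfolding perp_def down_def by (auto intro: le_bot2)

lemma dmap_R: "dmap k (a::'a) = partial (R a)"
proof -
  have "kpc k (down a) = perp (down a)"
    by (rule kpc_perp) (auto simp: down_def)
  moreover have "kpc k (perp (down a)) = perp (perp (down a))"
    by (rule kpc_perp) (use perp_ideal ideal_bot in \<open>auto simp: kideal_def\<close>)
  ultimately show ?thesis unfolding dmap_def R_def perp_down by simp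
qed

lemma partial_cong: assumes "kideal k (I::'a set)" shows "kcong k (partial I)"
  unfolding kcong_def
proof (intro conjI allI impI)
  show "equiv UNIV (partial I)"
    unfolding equiv_def refl_on_def sym_def trans_def partial_def by auto
  show "(top, top) \<in> partial I" by (simp add: partial_def)
next
  fix a b c d assume "(a, b) \<in> partial I" "(c, d) \<in> partial I"
  then have h1: "\<And>x. inf a x \<in> I \<longleftrightarrow> inf b x \<in> I" and h2: "\<And>x. inf c x \<in> I \<longleftrightarrow> inf d x \<in> I"
    unfolding partial_def by auto
  have "inf (inf a c) x \<in> I \<longleftrightarrow> inf (inf b d) x \<in> I" for x
  proof -
    have e1: "inf (inf a c) x = inf a (inf c x)" "inf (inf b c) x = inf b (inf c x)"
      by (simp_all add: inf_assoc)
    have e2: "inf (inf b c) x = inf c (inf b x)" "inf (inf b d) x = inf d (inf b x)"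
      by (simp_all add: ac_simps)
    show ?thesis using h1[of "inf c x"] h2[of "inf b x"] e1 e2 by simp
  qed
  then show "(inf a c, inf b d) \<in> partial I" unfolding partial_def by simp
next
  fix S assume S: "S \<subseteq> partial I" "|S| <o k"
  have key: "inf (ksup (g ` S)) x \<in> I \<longleftrightarrow> (\<forall>p\<in>S. inf (g p) x \<in> I)" for g :: "'a \<times> 'a \<Rightarrow> 'a" and x
  proof -
    have "inf (ksup (g ` S)) x = ksup ((\<lambda>s. inf x s) ` g ` S)"
      using dist[OF img_less[OF S(2)]] by (simp add: inf_commute)
    also have "\<dots> \<in> I \<longleftrightarrow> (\<lambda>s. inf x s) ` g ` S \<subseteq> I"
      by (rule ideal_join[OF assms]) (intro img_less S(2))
    finally show ?thesis by (auto simp: inf_commute)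
  qed
  show "(ksup (fst ` S), ksup (snd ` S)) \<in> partial I"
  proof -
    have "\<forall>p\<in>S. inf (fst p) x \<in> I \<longleftrightarrow> inf (snd p) x \<in> I" for x
      using S(1) by (auto simp: partial_def)
    then have "\<forall>x. inf (ksup (fst ` S)) x \<in> I \<longleftrightarrow> inf (ksup (snd ` S)) x \<in> I"
      unfolding key by blast
    then show ?thesis unfolding partial_def by simp
  qed
qed

lemma ideal_singleton: "kideal k {bot::'a}"
  unfolding kideal_def by (auto simp: bot_unique)

lemma DL_partial: "(DL::'a rel) = partial {bot}"
  unfolding DL_def partial_def by auto

lemma key: assumes "bot \<in> K" "K \<subseteq> perp T"
  shows "partial K \<subseteq> partial (perp T)"
proof -
  have ch: "y \<in> perp T \<longleftrightarrow> (\<forall>z\<in>T. inf y z \<in> K)" for y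
  proof
    assume "y \<in> perp T" then show "\<forall>z\<in>T. inf y z \<in> K" using assms by (auto simp: perp_def)
  next
    assume a: "\<forall>z\<in>T. inf y z \<in> K"
    { fix z assume "z \<in> T"
      then have "inf y z \<in> perp T" using a assms(2) by blast
      then have "inf (inf y z) z = bot" using \<open>z \<in> T\<close> unfolding perp_def by blast
      then have "inf y z = bot" by (simp add: inf_assoc) }
    then show "y \<in> perp T" by (auto simp: perp_def)
  qed
  show ?thesis
  proof
    fix p assume "p \<in> partial K"
    then obtain b c where p: "p = (b, c)" "\<forall>x. inf b x \<in> K \<longleftrightarrow> inf c x \<in> K"
      unfolding partial_def by auto
    have "inf b x \<in> perp T \<longleftrightarrow> inf c x \<in> perp T" for x
      unfolding ch using p(2)[rule_format, of "inf x _"] by (simp add: inf_assoc)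
    then show "p \<in> partial (perp T)" using p by (simp add: partial_def)
  qed
qed

lemma R_ideal: "kideal k (R a)" unfolding R_def by (rule perp_ideal)
lemma bot_R: "bot \<in> R a" unfolding R_def perp_def by auto
lemma R_down: "y \<in> R a \<Longrightarrow> x \<le> y \<Longrightarrow> x \<in> R a"
  using R_ideal unfolding kideal_def by blast
lemma a_R: "a \<in> R a" unfolding R_def perp_def by (auto simp: inf_commute)
lemma R_mono: assumes "a \<le> b" shows "R a \<subseteq> R b"
proof
  fix y assume y: "y \<in> R a"
  show "y \<in> R b" unfolding R_def perp_def
  proof (intro CollectI ballI)
    fix z assume "z \<in> {z. inf z b = bot}"
    then have "inf z b = bot" by simp
    moreover have "inf z a \<le> inf z b" using assms by (rule inf_mono[OF order_refl])
    ultimately have "inf z a = bot" using le_bot by auto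
    then show "inf y z = bot" using y unfolding R_def perp_def by blast
  qed
qed

lemma dmap_mono: assumes "(a::'a) \<le> b" shows "dmap k a \<subseteq> dmap k b"
proof -
  have "R a \<subseteq> perp {z. inf z b = bot}" using R_mono[OF assms] unfolding R_def[of b] .
  then show ?thesis unfolding dmap_R using key[OF bot_R] by (simp add: R_def[of b])
qed

lemma DL_sub: "DL \<subseteq> dmap k (a::'a)"
  unfolding dmap_R DL_partial R_def by (rule key) (auto simp: perp_def)

lemma dmap_inf: "dmap k (inf (a::'a) b) = dmap k a \<inter> dmap k b"
proof (rule equalityI)
  show "dmap k (inf a b) \<subseteq> dmap k a \<inter> dmap k b" using dmap_mono[of "inf a b" a] dmap_mono[of "inf a b" b] by auto
  have sub: "R a \<inter> R b \<subseteq> R (inf a b)"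
  proof
    fix y assume y: "y \<in> R a \<inter> R b"
    show "y \<in> R (inf a b)" unfolding R_def perp_def
    proof (intro CollectI ballI)
      fix z assume "z \<in> {z. inf z (inf a b) = bot}"
      then have z: "inf z (inf a b) = bot" by simp
      have "inf (inf z b) a = bot" using z by (simp add: ac_simps)
      then have "inf y (inf z b) = bot" using y by (auto simp: R_def perp_def)
      then have "inf (inf y z) b = bot" by (simp add: ac_simps)
      then have "inf (inf y z) (inf y z) = bot" using y by (auto simp: R_def perp_def)
      then show "inf y z = bot" by simp
    qed
  qed
  have "dmap k a \<inter> dmap k b \<subseteq> partial (R a \<inter> R b)"
    unfolding dmap_R partial_def by auto
  also have "\<dots> \<subseteq> dmap k (inf a b)"
    unfolding dmap_R using key[of "R a \<inter> R b" "{z. inf z (inf a b) = bot}"] sub bot_R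
    by (simp add: R_def[of "inf a b"])
  finally show "dmap k a \<inter> dmap k b \<subseteq> dmap k (inf a b)" .
qed

lemma dmap_top: "dmap k (top::'a) = UNIV"
proof -
  have "R top = UNIV" unfolding R_def perp_def by auto
  then show ?thesis unfolding dmap_R partial_def by auto
qed

lemma dmap_cong: "kcong k (dmap k (a::'a))"
  unfolding dmap_R by (rule partial_cong[OF R_ideal])

lemma DL_cong: "kcong k (DL::'a rel)"
  unfolding DL_partial by (rule partial_cong[OF ideal_singleton])

lemma kernel: "{(a, b). dmap k a = dmap k b} = (DL::'a rel)"
proof (intro set_eqI iffI; clarify)
  fix a b :: 'a assume eq: "dmap k a = dmap k b"
  have "a \<in> R b" if "dmap k a = dmap k b" for a b :: 'a
  proof -
    have "(bot, a) \<in> partial (R a)" unfolding partial_def using bot_R R_down[OF a_R inf_le1] by auto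
    then have "(bot, a) \<in> partial (R b)" using that unfolding dmap_R by simp
    then show ?thesis using bot_R unfolding partial_def by (auto dest: spec[of _ top])
  qed
  then have "a \<in> R b" "b \<in> R a" using eq by auto
  then show "(a, b) \<in> DL" unfolding DL_def R_def perp_def by (auto simp: inf_commute)
next
  fix a b :: 'a assume "(a, b) \<in> DL"
  then have "R a = R b" unfolding DL_def R_def by (auto simp: inf_commute)
  then show "dmap k a = dmap k b" unfolding dmap_R by simp
qed


lemma kcong_join: "kcong k (C::'a rel) \<Longrightarrow> S' \<subseteq> C \<Longrightarrow> |S'| <o k \<Longrightarrow> (ksup (fst ` S'), ksup (snd ` S')) \<in> C"
  by (simp add: kcong_def)
lemma kcong_equiv: "kcong k (C::'a rel) \<Longrightarrow> equiv UNIV C"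
  by (simp add: kcong_def)

lemma dmap_join: assumes S: "|S::'a set| <o k" shows "dmap k (ksup S) = upjoin k (dmap k ` S)"
proof
  let ?s = "ksup S"
  show "upjoin k (dmap k ` S) \<subseteq> dmap k ?s"
    unfolding upjoin_def cjoin_def
  proof (rule Inter_lower, intro CollectI conjI)
    show "kcong k (dmap k ?s)" by (rule dmap_cong)
    show "\<Union> (insert DL (dmap k ` S)) \<subseteq> dmap k ?s"
      using DL_sub dmap_mono[OF upper[OF S]] by auto
  qed
  show "dmap k ?s \<subseteq> upjoin k (dmap k ` S)"
    unfolding upjoin_def cjoin_def
  proof (rule Inter_greatest)
    fix C assume "C \<in> {C. kcong k C \<and> \<Union> (insert DL (dmap k ` S)) \<subseteq> C}"
    then have C: "kcong k C" "\<Union> (insert DL (dmap k ` S)) \<subseteq> C" by auto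
    have eqv: "equiv UNIV C" by (rule kcong_equiv[OF C(1)])
    then have symC: "sym C" and trC: "trans C" and rfC: "\<And>x. (x, x) \<in> C"
      unfolding equiv_def refl_on_def by auto
    have ba: "(bot, a) \<in> C" if "a \<in> S" for a
    proof -
      have "(bot, a) \<in> partial (R a)" unfolding partial_def using bot_R R_down[OF a_R inf_le1] by auto
      then have "(bot, a) \<in> dmap k a" unfolding dmap_R .
      then show ?thesis using C(2) that by auto
    qed
    have subC: "(\<lambda>a. (bot::'a, a)) ` S \<subseteq> C" using ba by auto
    have "(ksup (fst ` (\<lambda>a. (bot::'a, a)) ` S), ksup (snd ` (\<lambda>a. (bot::'a, a)) ` S)) \<in> C"
      by (rule kcong_join[OF C(1) subC img_less[OF S]])
    moreover have "ksup (fst ` (\<lambda>a. (bot::'a, a)) ` S) = bot" by (rule ksup_bot) auto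
    moreover have "snd ` (\<lambda>a. (bot::'a, a)) ` S = S" by (simp add: image_image)
    ultimately have bs: "(bot, ?s) \<in> C" by simp
    have bbs: "(b, sup b ?s) \<in> C" for b
    proof -
      have sub2: "{(b,b),(bot,?s)} \<subseteq> C" using bs rfC by auto
      have "(ksup (fst ` {(b,b),(bot,?s)}), ksup (snd ` {(b,b),(bot,?s)})) \<in> C"
        by (rule kcong_join[OF C(1) sub2 fin_less[OF cinf]]) simp
      moreover have "ksup (fst ` {(b,b),(bot,?s)}) = b" by (rule ksup_eq) (auto simp: is_lub_def)
      moreover have "ksup (snd ` {(b,b),(bot,?s)}) = sup b ?s" by (rule ksup_eq) (auto simp: is_lub_def)
      ultimately show ?thesis by simp
    qed
    show "dmap k ?s \<subseteq> C"
    proof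
      fix p assume "p \<in> dmap k ?s"
      then obtain b c where p: "p = (b, c)" "\<forall>x. inf b x \<in> R ?s \<longleftrightarrow> inf c x \<in> R ?s"
        unfolding dmap_R partial_def by auto
      have z: "inf y x \<in> R ?s \<longleftrightarrow> inf y x = bot" if "inf ?s x = bot" for y x
      proof
        assume "inf y x \<in> R ?s"
        moreover have "x \<in> {z. inf z ?s = bot}" using that by (simp add: inf_commute)
        ultimately have "inf (inf y x) x = bot" unfolding R_def perp_def by blast
        then show "inf y x = bot" by (simp add: inf_assoc)
      qed (simp add: bot_R)
      have "inf (sup b ?s) x = bot \<longleftrightarrow> inf (sup c ?s) x = bot" for x
      proof (cases "inf ?s x = bot")
        case True
        then show ?thesis using p(2) z[OF True, of b] z[OF True, of c] by (simp add: inf_sup_distrib2)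
      qed (simp add: inf_sup_distrib2)
      then have "(sup b ?s, sup c ?s) \<in> DL" unfolding DL_def by simp
      then have m: "(sup b ?s, sup c ?s) \<in> C" using C(2) by blast
      have "(sup c ?s, c) \<in> C" using symC bbs[of c] by (rule symD)
      then have "(sup b ?s, c) \<in> C" using m trC by (meson transD)
      then show "p \<in> C" using bbs[of b] trC p(1) by (meson transD)
    qed
  qed
qed

end
theorem mainTheorem19:
  fixes k :: "'k rel"
  assumes "Cinfinite k" and "regularCard k"
    and "kappa_frame k TYPE('a::{distrib_lattice,bounded_lattice})"
  shows "kcong k (DL :: 'a rel)
    \<and> (\<forall>a::'a. kcong k (dmap k a) \<and> DL \<subseteq> dmap k a)
    \<and> (\<forall>a b::'a. dmap k (inf a b) = dmap k a \<inter> dmap k b)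
    \<and> dmap k (top::'a) = UNIV
    \<and> (\<forall>S::'a set. |S| <o k \<longrightarrow> dmap k (ksup S) = upjoin k (dmap k ` S))
    \<and> {(a, b). dmap k a = dmap k b} = (DL :: 'a rel)
    \<and> mono (dmap k :: 'a \<Rightarrow> 'a rel)
    \<and> (\<forall>a b::'a. \<exists>c. dmap k a \<inter> dmap k b = dmap k c)
    \<and> (\<exists>c::'a. dmap k c = UNIV)
    \<and> (\<forall>F. F \<noteq> {} \<longrightarrow> F \<subseteq> range (dmap k :: 'a \<Rightarrow> 'a rel) \<longrightarrow> |F| <o k
          \<longrightarrow> cjoin k F \<in> range (dmap k))"
proof -
  interpret kf k "TYPE('a)" using assms(1,3) by unfold_locales
  have last: "cjoin k F \<in> range (dmap k)"
    if F: "F \<noteq> {}" "F \<subseteq> range (dmap k :: 'a \<Rightarrow> 'a rel)" "|F| <o k" for F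
  proof -
    define f where "f X = (SOME a::'a. dmap k a = X)" for X
    have fX: "dmap k (f X) = X" if XF: "X \<in> F" for X
    proof -
      obtain a where "X = dmap k a" using F(2) XF by blast
      then show ?thesis unfolding f_def by (metis (mono_tags) someI)
    qed
    have "dmap k ` (f ` F) = (\<lambda>X. dmap k (f X)) ` F" by (simp add: image_image)
    also have "\<dots> = (\<lambda>X. X) ` F" using fX by (rule image_cong[OF refl])
    finally have img: "dmap k ` (f ` F) = F" by simp
    have card: "|f ` F| <o k" by (rule img_less[OF F(3)])
    have "cjoin k F = upjoin k F"
    proof -
      have "\<Union> (insert DL F) \<subseteq> C \<longleftrightarrow> \<Union> F \<subseteq> C" for C :: "'a rel"
      proof -
        obtain X where "X \<in> F" using F(1) by blast
        obtain a where "X = dmap k a" using F(2) \<open>X \<in> F\<close> by blast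
        then have "DL \<subseteq> X" using DL_sub by simp
        then show ?thesis using \<open>X \<in> F\<close> by auto
      qed
      then show ?thesis unfolding upjoin_def cjoin_def by simp
    qed
    also have "\<dots> = dmap k (ksup (f ` F))" using dmap_join[OF card] img by simp
    finally show ?thesis by simp
  qed
  have m: "mono (dmap k :: 'a \<Rightarrow> 'a rel)" by (rule monoI, rule dmap_mono)
  show ?thesis
    apply (intro conjI)
    subgoal by (rule DL_cong)
    subgoal using dmap_cong DL_sub by blast
    subgoal using dmap_inf by blast
    subgoal by (rule dmap_top)
    subgoal using dmap_join by blast
    subgoal by (rule kernel)
    subgoal by (rule m)
    subgoal by (intro allI exI) (rule dmap_inf[symmetric])
    subgoal using dmap_top by blast
    subgoal using last by blast
    done
qed

end
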